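(* Let a target $T$ be fixed at a point $(x_T,y_T)\in\mathbb{R}^2$, and consider a UAV with dynamics $\dot x=V\cos\psi$, $\dot y=V\sin\psi$, $\dot\psi=\omega$, $V>0$ constant. Let $r(t)$ be the distance from the UAV to $T$ and $\theta(t)\in[0,2\pi)$ the bearing angle. Let the control input be $$\omega=\begin{cases} k\left[V\cos\!\left(\pi-\sin^{-1}\!\left(\frac{r_a}{r(t)}\right)\right)-\dot r(t)\right], & r(t)\ge r_a,\\ 0,&\text{otherwise},\end{cases}$$ with constants $k>0$ and $r_a\ge 0$. Then for any initial bearing $\theta(0)$ there exists $t^\star\ge 0$ such that $\theta(t)\in[0,\pi]$ for all $t\ge t^\star$.
   Context: The bearing angle $\theta(t)\in[0,2\pi)$ is the angle measured counterclockwise from the vector pointing from the UAV's current position to $T$ to the UAV's current heading $(\cos\psi,\sin\psi)$. In these variables the dynamics read $\dot r=-V\cos\theta$, $\dot\theta=\omega+\frac{V\sin\theta}{r}$. $\sin^{-1}$ is the principal arcsine. *)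

theory Defs
  imports "HOL-Analysis.Analysis"
begin

definition bearing :: "real \<Rightarrow> real" where
  "bearing a = a - 2 * pi * of_int \<lfloor>a / (2 * pi)\<rfloor>"

definition ctrl :: "real \<Rightarrow> real \<Rightarrow> real \<Rightarrow> real \<Rightarrow> real \<Rightarrow> real" where
  "ctrl k V ra rr rd =
     (if rr \<ge> ra then k * (V * cos (pi - arcsin (ra / rr)) - rd) else 0)"

end

theory Submission
  imports Defs
begin


lemma mono_countable:
  fixes f f' :: "real \<Rightarrow> real"
  assumes ab: "a \<le> b" and cont: "continuous_on {a..b} f" and cS: "countable S"
    and der: "\<And>x. x \<in> {a..b} - S \<Longrightarrow> (f has_real_derivative f' x) (at x within {a..b})"
    and neg: "\<And>x. x \<in> {a..b} - S \<Longrightarrow> f' x \<le> 0"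
  shows "f b \<le> f a"
proof (rule ccontr)
  assume "\<not> f b \<le> f a"
  hence fba: "f b > f a" by simp
  hence "a < b" using ab by (cases "a = b") auto
  define c where "c = (f b - f a) / (2 * (b - a))"
  have c0: "c > 0" using fba \<open>a < b\<close> by (simp add: c_def)
  define g where "g t = f t - c * (t - a)" for t
  have gcont: "continuous_on {a..b} g" unfolding g_def
    by (intro continuous_intros cont)
  have "c * (b - a) = (f b - f a) / 2" using \<open>a < b\<close> by (simp add: c_def field_simps)
  hence gab: "g a < g b" using fba by (simp add: g_def)
  have gder: "(g has_real_derivative (f' x - c)) (at x within {a..b})" if "x \<in> {a..b} - S" for x
    unfolding g_def using der[OF that]
    by (auto intro!: derivative_eq_intros)
  define T where "T y = Sup {t \<in> {a..b}. g t \<le> y}" for y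
  have key: "T y \<in> S \<and> g (T y) = y" if y: "y \<in> {g a<..<g b}" for y
  proof -
    let ?K = "{t \<in> {a..b}. g t \<le> y}"
    have Keq: "?K = {a..b} \<inter> g -` {..y}" by auto
    have "closed ?K" unfolding Keq
      by (rule continuous_closed_preimage[OF gcont]) auto
    hence cK: "compact ?K" unfolding compact_eq_bounded_closed by (auto intro: bounded_subset[of "{a..b}"])
    have aK: "a \<in> ?K" using y \<open>a < b\<close> by auto
    obtain m where mK: "m \<in> ?K" and mmax: "\<forall>t\<in>?K. t \<le> m"
      using compact_attains_sup[OF cK] aK by blast
    have Tm: "T y = m" unfolding T_def
      by (rule cSup_eq_maximum[OF mK]) (use mmax in auto)
    have mb: "m < b" using mK y by (cases "m = b") auto
    have mab: "a \<le> m" "m \<le> b" using mK by auto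
    have gm: "g m \<le> y" using mK by auto
    obtain s where s: "s \<in> {m..b}" "g s = y"
      using IVT'[of g m y b] gm y mab continuous_on_subset[OF gcont, of "{m..b}"] by auto
    have "s \<in> ?K" using s mab by auto
    hence "s \<le> m" using mmax by auto
    hence gmy: "g m = y" using s by auto
    have right: "g t > y" if "t \<in> {m<..b}" for t
    proof (rule ccontr)
      assume "\<not> g t > y"
      hence "t \<in> ?K" using that mab by auto
      thus False using mmax that by auto
    qed
    have "m \<in> S"
    proof (rule ccontr)
      assume "m \<notin> S"
      hence mS: "m \<in> {a..b} - S" using mab by auto
      obtain d where d: "d > 0" "\<forall>h>0. m + h \<in> {a..b} \<longrightarrow> h < d \<longrightarrow> g m > g (m + h)"
        using has_real_derivative_neg_dec_right[OF gder[OF mS]] neg[OF mS] c0 by force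
      define h where "h = min d (b - m) / 2"
      have h1: "h > 0" "h < d" "h \<le> (b - m) / 2" using d mb mab by (auto simp: h_def min_def)
      hence h: "h > 0" "h < d" "m + h \<in> {a..b}" using mb mab by auto
      have "g (m + h) > y" using right h mb by (auto simp: h_def)
      thus False using d h gmy by force
    qed
    thus ?thesis using Tm gmy by simp
  qed
  have "inj_on T {g a<..<g b}"
    by (rule inj_onI) (metis key)
  moreover have "T ` {g a<..<g b} \<subseteq> S" using key by auto
  hence "countable (T ` {g a<..<g b})" using cS countable_subset by blast
  ultimately have "countable {g a<..<g b}" using countable_image_inj_on by blast
  thus False using uncountable_open_interval gab by blast
qed
lemma ftc_le:
  fixes f f' :: "real \<Rightarrow> real"
  assumes ab: "a \<le> b" and cont: "continuous_on {a..b} f" and cS: "countable S"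
    and der: "\<And>x. x \<in> {a..b} - S \<Longrightarrow> (f has_real_derivative f' x) (at x within {a..b})"
    and le: "\<And>x. x \<in> {a..b} - S \<Longrightarrow> f' x \<le> C"
  shows "f b - f a \<le> C * (b - a)"
proof -
  have "(\<lambda>t. f t - C * t) b \<le> (\<lambda>t. f t - C * t) a"
    by (rule mono_countable[OF ab _ cS, of _ "\<lambda>x. f' x - C"])
      (auto intro!: continuous_intros cont derivative_eq_intros der simp: le)
  thus ?thesis by (simp add: algebra_simps)
qed

lemma barrier:
  fixes f f' :: "real \<Rightarrow> real"
  assumes ab: "a \<le> b" and cont: "continuous_on {a..b} f" and cS: "countable S"
    and der: "\<And>x. x \<in> {a..b} - S \<Longrightarrow> (f has_real_derivative f' x) (at x within {a..b})"
    and fa: "f a \<le> p" and eta: "\<eta> > 0"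
    and bd: "\<And>x. x \<in> {a..b} - S \<Longrightarrow> p < f x \<Longrightarrow> f x < p + \<eta> \<Longrightarrow> f' x \<le> L * (f x - p)"
  shows "\<forall>t\<in>{a..b}. f t \<le> p"
proof (rule ccontr)
  assume "\<not> (\<forall>t\<in>{a..b}. f t \<le> p)"
  then obtain t2 where t2: "t2 \<in> {a..b}" "f t2 > p" by force
  let ?K = "{t \<in> {a..t2}. f t \<le> p}"
  have cont2: "continuous_on {a..t2} f" using continuous_on_subset[OF cont] t2 by auto
  have Keq: "?K = {a..t2} \<inter> f -` {..p}" by auto
  have "closed ?K" unfolding Keq
    by (rule continuous_closed_preimage[OF cont2]) auto
  hence cK: "compact ?K" unfolding compact_eq_bounded_closed by (auto intro: bounded_subset[of "{a..t2}"])
  have aK: "a \<in> ?K" using fa t2 by auto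
  obtain u where uK: "u \<in> ?K" and umax: "\<forall>t\<in>?K. t \<le> u"
    using compact_attains_sup[OF cK] aK by blast
  have ut2: "u < t2" using uK t2 by (cases "u = t2") auto
  have au: "a \<le> u" using uK by auto
  have fu: "f u \<le> p" using uK by auto
  have above: "f t > p" if "t \<in> {u<..t2}" for t
  proof (rule ccontr)
    assume "\<not> f t > p"
    hence "t \<in> ?K" using that au by auto
    thus False using umax that by auto
  qed
  obtain v where v: "u < v" "v \<le> t2" and vsmall: "\<forall>t\<in>{u..v}. f t < p + \<eta>"
  proof (cases "\<exists>t\<in>{u..t2}. f t \<ge> p + \<eta>/2")
    case False
    thus ?thesis using that[of t2] ut2 eta by force
  next
    case True
    let ?K2 = "{t \<in> {u..t2}. f t \<ge> p + \<eta>/2}"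
    have cont3: "continuous_on {u..t2} f" using continuous_on_subset[OF cont] t2 au by auto
    have K2eq: "?K2 = {u..t2} \<inter> f -` {p + \<eta>/2..}" by auto
    have "closed ?K2" unfolding K2eq
      by (rule continuous_closed_preimage[OF cont3]) auto
    hence cK2: "compact ?K2" unfolding compact_eq_bounded_closed by (auto intro: bounded_subset[of "{u..t2}"])
    obtain w where wK: "w \<in> ?K2" and wmin: "\<forall>t\<in>?K2. w \<le> t"
      using compact_attains_inf[OF cK2] True by blast
    have uw: "u < w" using wK fu eta by (cases "u = w") auto
    show ?thesis
    proof (rule that[of "(u + w) / 2"])
      show "u < (u + w) / 2" using uw by simp
      show "(u + w) / 2 \<le> t2" using wK uw by auto
      show "\<forall>t\<in>{u..(u + w) / 2}. f t < p + \<eta>"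
      proof
        fix t assume t: "t \<in> {u..(u + w) / 2}"
        have "t < w" using t uw by auto
        hence "t \<notin> ?K2" using wmin by force
        thus "f t < p + \<eta>" using t wK eta by auto
      qed
    qed
  qed
  define g where "g t = exp (- L * t) * (f t - p)" for t
  have sub: "{u..v} \<subseteq> {a..b}" using au v t2 by auto
  have "g v \<le> g u"
  proof (rule mono_countable[of u v g "insert u S" "\<lambda>t. exp (- L * t) * (f' t - L * (f t - p))"])
    show "u \<le> v" using v by simp
    show "continuous_on {u..v} g" unfolding g_def
      by (intro continuous_intros continuous_on_subset[OF cont sub])
    show "countable (insert u S)" using cS by simp
    fix x assume x: "x \<in> {u..v} - insert u S"
    hence xab: "x \<in> {a..b} - S" using sub by auto
    have d1: "(f has_real_derivative f' x) (at x within {u..v})"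
      using DERIV_subset[OF der[OF xab] sub] .
    show "(g has_real_derivative exp (- L * x) * (f' x - L * (f x - p))) (at x within {u..v})"
      unfolding g_def using d1
      by (auto intro!: derivative_eq_intros simp: algebra_simps)
    have xu: "x \<in> {u<..t2}" using x v by auto
    have "f' x \<le> L * (f x - p)" using bd[OF xab above[OF xu]] vsmall x by auto
    thus "exp (- L * x) * (f' x - L * (f x - p)) \<le> 0"
      by (simp add: mult_nonneg_nonpos)
  qed
  moreover have "g u \<le> 0" unfolding g_def using fu by (simp add: mult_nonneg_nonpos)
  moreover have "g v > 0" unfolding g_def using above[of v] v by simp
  ultimately show False by simp
qed



lemma ctrl_lt: "rr < ra \<Longrightarrow> ctrl k V ra rr d = 0"
  by (simp add: ctrl_def)

lemma ctrl_ge_eq: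
  assumes "rr \<ge> ra" "ra \<ge> 0" "rr > 0"
  shows "ctrl k V ra rr (- V * cos x) = k * V * (cos x - sqrt (1 - (ra/rr)\<^sup>2))"
    and "0 \<le> sqrt (1 - (ra/rr)\<^sup>2)" "sqrt (1 - (ra/rr)\<^sup>2) \<le> 1"
proof -
  have q: "0 \<le> ra / rr" "ra / rr \<le> 1" using assms by auto
  show "ctrl k V ra rr (- V * cos x) = k * V * (cos x - sqrt (1 - (ra/rr)\<^sup>2))"
  proof -
    have "cos (arcsin (ra/rr)) = sqrt (1 - (ra/rr)\<^sup>2)" using q by (intro cos_arcsin) auto
    thus ?thesis using assms by (simp add: ctrl_def algebra_simps)
  qed
  have "(ra/rr)\<^sup>2 \<le> 1" using q by (simp add: power_le_one)
  thus "0 \<le> sqrt (1 - (ra/rr)\<^sup>2)" by simp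
  show "sqrt (1 - (ra/rr)\<^sup>2) \<le> 1" using q by simp
qed

lemma ctrl_le_cos:
  assumes "rr \<ge> ra" "ra \<ge> 0" "rr > 0" "k > 0" "V > 0"
  shows "ctrl k V ra rr (- V * cos x) \<le> k * V * cos x"
  using ctrl_ge_eq(1)[OF assms(1-3), of k V x] ctrl_ge_eq(2)[OF assms(1-3)] assms(4,5)
  by (simp add: mult_le_cancel_left_pos)

lemma ctrl_le_max:
  assumes "ra \<ge> 0" "rr > 0" "k > 0" "V > 0"
  shows "ctrl k V ra rr (- V * cos x) \<le> k * V * max (cos x) 0"
proof (cases "rr \<ge> ra")
  case True
  thus ?thesis using ctrl_le_cos[OF True assms, of x] assms
    by (meson assms(3,4) max.cobounded1 mult_left_mono mult_pos_pos less_imp_le order_trans)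
next
  case False
  thus ?thesis using assms by (simp add: ctrl_lt)
qed

lemma ctrl_lower:
  assumes "ra \<ge> 0" "rr > 0" "k > 0" "V > 0"
  shows "ctrl k V ra rr (- V * cos x) \<ge> k * V * (cos x - 1)"
proof (cases "rr \<ge> ra")
  case True
  note e1 = ctrl_ge_eq(1)[OF True assms(1,2), of k V x]
  have "cos x - 1 \<le> cos x - sqrt (1 - (ra/rr)\<^sup>2)" using ctrl_ge_eq(3)[OF True assms(1,2)] by simp
  thus ?thesis using e1 assms by (simp add: mult_left_mono)
next
  case False
  have "cos x - 1 \<le> 0" by simp
  hence "k * V * (cos x - 1) \<le> 0" using assms by (simp add: mult_nonneg_nonpos)
  thus ?thesis using False by (simp add: ctrl_lt)
qed

lemma sin_sub_2pim: "sin (x - 2 * pi * of_int m) = sin x"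
  by (simp add: sin_diff)
lemma cos_sub_2pim: "cos (x - 2 * pi * of_int m) = cos x"
  by (simp add: cos_diff)

lemma one_minus_cos_le: assumes "-(pi/2) \<le> x" "x \<le> 0" shows "1 - cos x \<le> - x"
proof -
  have c: "0 \<le> cos x" using assms by (intro cos_ge_zero) auto
  have s0: "sin x \<le> 0" using assms sin_ge_zero[of "-x"] by simp
  have s1: "\<bar>sin x\<bar> \<le> - x" using sin_x_le_x[of "-x"] assms s0 by simp
  have "(1 - cos x) * (1 - cos x) \<le> (1 - cos x) * (1 + cos x)" using c
    by (intro mult_left_mono) auto
  also have "\<dots> = (sin x)\<^sup>2" using sin_cos_squared_add[of x] by (simp add: algebra_simps power2_eq_square)
  finally have "(1 - cos x)\<^sup>2 \<le> \<bar>sin x\<bar>\<^sup>2" by (simp add: power2_eq_square)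
  hence "1 - cos x \<le> \<bar>sin x\<bar>" using abs_le_square_iff[of "1 - cos x" "\<bar>sin x\<bar>"] by simp
  thus ?thesis using s1 by simp
qed

lemma sin_le_cos_minus1: assumes "-(pi/2) \<le> x" "x \<le> 0" shows "sin x \<le> cos x - 1"
proof -
  have c: "0 \<le> cos x" using assms by (intro cos_ge_zero) auto
  have s: "sin x \<le> 0" using assms sin_ge_zero[of "-x"] by simp
  have "(1 - cos x) * (1 - cos x) \<le> (1 - cos x) * (1 + cos x)" using c
    by (intro mult_left_mono) auto
  also have "\<dots> = (sin x)\<^sup>2" using sin_cos_squared_add[of x] by (simp add: algebra_simps power2_eq_square)
  finally have "(1 - cos x)\<^sup>2 \<le> \<bar>sin x\<bar>\<^sup>2" by (simp add: power2_eq_square)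
  hence "1 - cos x \<le> \<bar>sin x\<bar>" using abs_le_square_iff[of "1 - cos x" "\<bar>sin x\<bar>"] by simp
  thus ?thesis using s by simp
qed




theorem lemma4:
  fixes V k ra :: real and r th :: "real \<Rightarrow> real" and S :: "real set"
  assumes "V > 0" and "k > 0" and "ra \<ge> 0"
    and "\<forall>t\<ge>0. r t > 0"
    and "continuous_on {0..} r" and "continuous_on {0..} th"
    and "countable S"
    and "\<forall>t\<in>{0..} - S. (r has_real_derivative (- V * cos (th t))) (at t within {0..})"
    and "\<forall>t\<in>{0..} - S. (th has_real_derivative
            (ctrl k V ra (r t) (- V * cos (th t)) + V * sin (th t) / r t)) (at t within {0..})"
  shows "\<exists>ts\<ge>0. \<forall>t\<ge>ts. bearing (th t) \<in> {0..pi}"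
proof -
  note V = assms(1) and kp = assms(2) and ra0 = assms(3) and cS = assms(7)
  define w where "w t = ctrl k V ra (r t) (- V * cos (th t))" for t
  define th' where "th' t = w t + V * sin (th t) / r t" for t
  have rpos: "r t > 0" if "t \<ge> 0" for t using assms(4) that by auto
  have dth: "(th has_real_derivative th' x) (at x within {a..b})" if "0 \<le> a" "x \<in> {a..b} - S" for a b x
    using assms(9) that DERIV_subset[of th "th' x" x "{0..}" "{a..b}"] by (auto simp: th'_def w_def)
  have dr: "(r has_real_derivative (- V * cos (th x))) (at x within {a..b})" if "0 \<le> a" "x \<in> {a..b} - S" for a b x
    using assms(8) that DERIV_subset[of r "- V * cos (th x)" x "{0..}" "{a..b}"] by auto
  have cth: "continuous_on {a..b} th" if "0 \<le> a" for a b
    using continuous_on_subset[OF assms(6)] that by auto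
  have cr: "continuous_on {a..b} r" if "0 \<le> a" for a b
    using continuous_on_subset[OF assms(5)] that by auto
  have wmax: "w t \<le> k * V * max (cos (th t)) 0" if "t \<ge> 0" for t
    unfolding w_def using ctrl_le_max[OF ra0 rpos[OF that] kp V] .
  have wcos: "w t \<le> k * V * cos (th t)" if "t \<ge> 0" "r t \<ge> ra" for t
    unfolding w_def using ctrl_le_cos[OF that(2) ra0 rpos[OF that(1)] kp V] .
  have wlow: "w t \<ge> k * V * (cos (th t) - 1)" if "t \<ge> 0" for t
    unfolding w_def using ctrl_lower[OF ra0 rpos[OF that] kp V] .
  have kV: "k * V > 0" using kp V by simp

  have inv: "th t \<in> {2*pi*m .. 2*pi*m + pi}"
    if t0: "t0 \<ge> 0" "th t0 \<in> {2*pi*m .. 2*pi*m + pi}" and tt: "t0 \<le> t" for t0 t and m :: int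
  proof -
    have up: "\<forall>s\<in>{t0..t}. th s - 2*pi*m - pi \<le> 0"
    proof (rule barrier[where f'=th' and \<eta>="pi/2" and L=0 and S=S])
      show "t0 \<le> t" by fact
      show "continuous_on {t0..t} (\<lambda>s. th s - 2*pi*m - pi)"
        by (intro continuous_intros cth t0)
      show "countable S" by fact
      show "th t0 - 2*pi*m - pi \<le> 0" using t0 by auto
      show "pi/2 > 0" by simp
    next
      fix x assume x: "x \<in> {t0..t} - S"
      show "((\<lambda>s. th s - 2*pi*m - pi) has_real_derivative th' x) (at x within {t0..t})"
        using dth[OF t0(1) x] by (auto intro!: derivative_eq_intros)
    next
      fix x assume x: "x \<in> {t0..t} - S" and h1: "0 < th x - 2*pi*m - pi"
        and h2: "th x - 2*pi*m - pi < 0 + pi/2"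
      define ph where "ph = th x - 2*pi*m"
      have x0: "x \<ge> 0" using x t0 by auto
      have s: "sin (th x) < 0"
        using sin_lt_zero[of ph] h1 h2 sin_sub_2pim[of "th x" m] by (simp add: ph_def)
      have "cos (ph - pi) > 0" using h1 h2 by (intro cos_gt_zero) (auto simp: ph_def)
      hence c: "cos (th x) < 0" using cos_sub_2pim[of "th x" m] by (simp add: ph_def)
      have "w x \<le> 0" using wmax[OF x0] c by simp
      moreover have "V * sin (th x) / r x < 0" using s V rpos[OF x0]
        by (simp add: divide_neg_pos mult_pos_neg)
      ultimately show "th' x \<le> 0 * (th x - 2*pi*m - pi - 0)" by (simp add: th'_def)
    qed
    obtain xm where xm: "xm \<in> {t0..t}" "\<forall>y\<in>{t0..t}. r xm \<le> r y"
      using continuous_attains_inf[of "{t0..t}" r] cr[OF t0(1)] tt by auto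
    define rmin where "rmin = r xm"
    have rmin0: "rmin > 0" using xm t0 rpos by (auto simp: rmin_def)
    have low: "\<forall>s\<in>{t0..t}. 2*pi*m - th s \<le> 0"
    proof (rule barrier[where f'="\<lambda>s. - th' s" and \<eta>="pi/2" and L="k*V + V/rmin" and S=S])
      show "t0 \<le> t" by fact
      show "continuous_on {t0..t} (\<lambda>s. 2*pi*m - th s)"
        by (intro continuous_intros cth t0)
      show "countable S" by fact
      show "2*pi*m - th t0 \<le> 0" using t0 by auto
      show "pi/2 > 0" by simp
    next
      fix x assume x: "x \<in> {t0..t} - S"
      show "((\<lambda>s. 2*pi*m - th s) has_real_derivative - th' x) (at x within {t0..t})"
        using dth[OF t0(1) x] by (auto intro!: derivative_eq_intros)
    next
      fix x assume x: "x \<in> {t0..t} - S" and h1: "0 < 2*pi*m - th x"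
        and h2: "2*pi*m - th x < 0 + pi/2"
      define ph where "ph = th x - 2*pi*m"
      have x0: "x \<ge> 0" using x t0 by auto
      have ph: "-(pi/2) \<le> ph" "ph < 0" using h1 h2 by (auto simp: ph_def)
      have c: "cos (th x) = cos ph" "sin (th x) = sin ph"
        using cos_sub_2pim[of "th x" m] sin_sub_2pim[of "th x" m] by (auto simp: ph_def)
      have "cos ph - 1 \<ge> ph" using one_minus_cos_le[of ph] ph by simp
      hence "w x \<ge> k * V * ph" using wlow[OF x0] c kV
        by (smt (verit, best) mult_left_mono)
      have sp: "sin ph \<ge> ph" using sin_x_le_x[of "-ph"] ph by simp
      have rx: "rmin \<le> r x" using xm x by (auto simp: rmin_def)
      have "ph / rmin \<le> ph / r x"
        by (rule divide_left_mono_neg) (use rx ph rmin0 in auto)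
      also have "\<dots> \<le> sin ph / r x" using sp rpos[OF x0] by (simp add: divide_right_mono)
      finally have "V * (ph / rmin) \<le> V * (sin ph / r x)" using V by (intro mult_left_mono) auto
      hence "V * sin (th x) / r x \<ge> V / rmin * ph" using c by (simp add: field_simps)
      with \<open>w x \<ge> k * V * ph\<close> have "th' x \<ge> (k * V + V / rmin) * ph"
        by (simp add: th'_def algebra_simps)
      moreover have "(k * V + V / rmin) * (2*pi*m - th x - 0) = - ((k * V + V / rmin) * ph)"
        by (simp add: ph_def algebra_simps)
      ultimately show "- th' x \<le> (k * V + V / rmin) * (2*pi*m - th x - 0)" by linarith
    qed
    have "th t - 2*pi*m - pi \<le> 0" "2*pi*m - th t \<le> 0" using up low tt by auto
    thus ?thesis by auto
  qed
  have reach: "\<exists>t0\<ge>0. \<exists>m::int. th t0 \<in> {2*pi*m .. 2*pi*m + pi}"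
  proof (rule ccontr)
    assume H: "\<not> ?thesis"
    have H': "th t \<notin> {2*pi * of_int m .. 2*pi * of_int m + pi}" if "t \<ge> 0" for t and m :: int
      using H that by blast
    define m0 :: int where "m0 = \<lfloor>th 0 / (2*pi)\<rfloor> + 1"
    have f1: "of_int (m0 - 1) \<le> th 0 / (2*pi)" "th 0 / (2*pi) < of_int m0"
      unfolding m0_def by (simp_all add: floor_less_iff)
    have fl: "2*pi*(m0-1) \<le> th 0" "th 0 < 2*pi*m0"
      using f1 by (simp_all add: field_simps)
    have "\<not> th 0 \<le> 2*pi * of_int (m0-1) + pi" using H'[of 0 "m0-1"] fl by auto
    hence b0: "2*pi*m0 - pi < th 0" by (simp add: algebra_simps)
    have band: "2*pi*m0 - pi < th t \<and> th t < 2*pi*m0" if t: "t \<ge> 0" for t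
    proof (rule ccontr)
      assume "\<not> (2*pi*m0 - pi < th t \<and> th t < 2*pi*m0)"
      then consider "th t \<le> 2*pi*m0 - pi" | "th t \<ge> 2*pi*m0" by linarith
      thus False
      proof cases
        case 1
        then obtain x where x: "0 \<le> x" "x \<le> t" "th x = 2*pi*m0 - pi"
          using IVT2'[of th t "2*pi*m0 - pi" 0] b0 t cth[of 0 t] by auto
        have "th x \<in> {2*pi * of_int (m0-1) .. 2*pi * of_int (m0-1) + pi}"
          using x(3) pi_gt_zero by (simp add: algebra_simps, linarith)
        thus False using H'[OF x(1)] by blast
      next
        case 2
        then obtain x where x: "0 \<le> x" "x \<le> t" "th x = 2*pi*m0"
          using IVT'[of th 0 "2*pi*m0" t] fl t cth[of 0 t] by auto
        have "th x \<in> {2*pi * of_int m0 .. 2*pi * of_int m0 + pi}"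
          using x(3) by simp
        thus False using H'[OF x(1)] by blast
      qed
    qed
    define ph where "ph t = th t - 2*pi*m0" for t
    have trig: "sin (th t) = sin (ph t)" "cos (th t) = cos (ph t)" for t
      using sin_sub_2pim[of "th t" m0] cos_sub_2pim[of "th t" m0] by (auto simp: ph_def)
    have phb: "- pi < ph t" "ph t < 0" if "t \<ge> 0" for t using band[OF that] by (auto simp: ph_def)
    have sneg: "sin (ph t) < 0" if "t \<ge> 0" for t
      using sin_gt_zero[of "- ph t"] phb[OF that] by simp
    have dph: "(ph has_real_derivative th' x) (at x within {a..b})" if "0 \<le> a" "x \<in> {a..b} - S" for a b x
      unfolding ph_def using dth[OF that] by (auto intro!: derivative_eq_intros)
    have cph: "continuous_on {a..b} ph" if "0 \<le> a" for a b
      unfolding ph_def by (intro continuous_intros cth that)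
    show False
    proof (cases "\<forall>t\<ge>0. ph t \<ge> -(pi/2)")
      case True
      define R0 where "R0 = r 0"
      have R0: "R0 > 0" using rpos[of 0] by (simp add: R0_def)
      have cpos: "cos (ph t) \<ge> 0" if "t \<ge> 0" for t
        using True that phb[OF that] by (intro cos_ge_zero) auto
      have rle: "r t \<le> R0" if t: "t \<ge> 0" for t
      proof -
        have "r t - r 0 \<le> 0 * (t - 0)"
        proof (rule ftc_le[OF t cr[of 0 t] cS, where f'="\<lambda>x. - V * cos (th x)"])
          fix x assume x: "x \<in> {0..t} - S"
          show "(r has_real_derivative - V * cos (th x)) (at x within {0..t})" using dr[of 0 x t] x by auto
          show "- V * cos (th x) \<le> 0" using cpos[of x] x V trig by auto
        qed simp
        thus ?thesis by (simp add: R0_def)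
      qed
      define c where "c = k + 1 / R0"
      have c0: "c > 0" using kp R0 by (simp add: c_def add_pos_pos)
      define F where "F t = ph t + c * r t" for t
      define T where "T = R0 * (k * R0 + 2 + pi) / V"
      have T0: "T \<ge> 0" using R0 kp V by (simp add: T_def)
      have "F T - F 0 \<le> (- V / R0) * (T - 0)"
      proof (rule ftc_le[OF T0 _ cS, where f'="\<lambda>x. th' x + c * (- V * cos (th x))"])
        show "continuous_on {0..T} F" unfolding F_def
          by (intro continuous_intros cph cr) auto
        fix x assume x: "x \<in> {0..T} - S"
        have x0: "x \<ge> 0" using x by auto
        show "(F has_real_derivative th' x + c * (- V * cos (th x))) (at x within {0..T})"
          unfolding F_def using dph[of 0 x T] dr[of 0 x T] x by (auto intro!: derivative_eq_intros)
        have w1: "w x \<le> k * V * cos (th x)" using wmax[OF x0] cpos[OF x0] trig by simp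
        have "sin (th x) / r x \<le> sin (th x) / R0"
          by (rule divide_left_mono_neg) (use rle[OF x0] sneg[OF x0] trig rpos[OF x0] R0 in auto)
        also have "\<dots> \<le> (cos (th x) - 1) / R0"
          using sin_le_cos_minus1[of "ph x"] True x0 phb[OF x0] trig R0 by (simp add: divide_right_mono)
        finally have "V * (sin (th x) / r x) \<le> V * ((cos (th x) - 1) / R0)"
          using V by (intro mult_left_mono) auto
        hence "th' x \<le> k * V * cos (th x) + V * ((cos (th x) - 1) / R0)"
          using w1 by (simp add: th'_def)
        moreover have "V * ((cos (th x) - 1) / R0) = V * cos (th x) / R0 - V / R0"
          using R0 by (simp add: field_simps)
        moreover have "c * (- V * cos (th x)) = - (k * V * cos (th x)) - V * cos (th x) / R0"
          using R0 by (simp add: c_def field_simps)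
        ultimately show "th' x + c * (- V * cos (th x)) \<le> - V / R0" by linarith
      qed
      moreover have "(- V / R0) * (T - 0) = - (k * R0 + 2 + pi)"
        using R0 V by (simp add: T_def field_simps)
      moreover have "F 0 < k * R0 + 1"
        using phb[of 0] R0 by (simp add: F_def c_def R0_def[symmetric] field_simps mult_pos_neg)
      moreover have "F T > - (pi/2)"
      proof -
        have "c * r T > 0" using c0 rpos[OF T0] by simp
        moreover have "- (pi/2) \<le> ph T" using True T0 by blast
        ultimately show ?thesis by (simp add: F_def)
      qed
      ultimately show False using pi_gt_zero by linarith
    next
      case False
      then obtain t1 where t1: "t1 \<ge> 0" "ph t1 < -(pi/2)" by auto
      define p where "p = ph t1"
      have cneg: "cos y < 0" if "- pi < y" "y < -(pi/2)" for y
      proof -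
        have "cos (y + pi) > 0" using that by (intro cos_gt_zero) auto
        thus ?thesis using cos_minus_pi[of "y + pi"] by simp
      qed
      have cp: "cos p < 0" using cneg phb[OF t1(1)] t1 by (simp add: p_def)
      have stay: "ph t \<le> p" if t: "t \<ge> t1" for t
      proof -
        have "\<forall>s\<in>{t1..t}. ph s \<le> p"
        proof (rule barrier[OF t cph[OF t1(1)] cS, where f'=th' and \<eta>="-(pi/2) - p" and L=0])
          show "\<And>x. x \<in> {t1..t} - S \<Longrightarrow> (ph has_real_derivative th' x) (at x within {t1..t})"
            using dph t1 by auto
          show "ph t1 \<le> p" by (simp add: p_def)
          show "-(pi/2) - p > 0" using t1 by (simp add: p_def)
        next
          fix x assume x: "x \<in> {t1..t} - S" and h1: "p < ph x" and h2: "ph x < p + (- (pi / 2) - p)"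
          have x0: "x \<ge> 0" using x t1 by auto
          have "cos (th x) < 0" using cneg[of "ph x"] phb[OF x0] h2 trig by simp
          hence "w x \<le> 0" using wmax[OF x0] by simp
          moreover have "V * sin (th x) / r x < 0" using sneg[OF x0] trig V rpos[OF x0]
            by (simp add: divide_neg_pos mult_pos_neg)
          ultimately show "th' x \<le> 0 * (ph x - p)" by (simp add: th'_def)
        qed
        thus ?thesis using t by auto
      qed
      have cle: "cos (th t) \<le> cos p" if t: "t \<ge> t1" for t
      proof -
        have t0: "t \<ge> 0" using t t1 by auto
        have "cos (- ph t) \<le> cos (- p)"
          using stay[OF t] phb[OF t0] t1 by (intro cos_monotone_0_pi_le) (auto simp: p_def)
        thus ?thesis using trig by simp
      qed
      define \<delta> where "\<delta> = - V * cos p"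
      have d0: "\<delta> > 0" using cp V by (simp add: \<delta>_def mult_pos_neg)
      have rgrow: "r t \<ge> r t1 + \<delta> * (t - t1)" if t: "t \<ge> t1" for t
      proof -
        have "(\<lambda>s. - r s) t - (\<lambda>s. - r s) t1 \<le> (- \<delta>) * (t - t1)"
        proof (rule ftc_le[OF t _ cS, where f'="\<lambda>x. V * cos (th x)"])
          show "continuous_on {t1..t} (\<lambda>s. - r s)" by (intro continuous_intros cr t1)
          fix x assume x: "x \<in> {t1..t} - S"
          show "((\<lambda>s. - r s) has_real_derivative V * cos (th x)) (at x within {t1..t})"
            using dr[OF t1(1) x] by (auto intro!: derivative_eq_intros)
          show "V * cos (th x) \<le> - \<delta>" using cle[of x] x V by (simp add: \<delta>_def mult_left_mono)
        qed
        thus ?thesis by (simp add: algebra_simps)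
      qed
      define t3 where "t3 = t1 + ra / \<delta>"
      have t3: "t3 \<ge> t1" using ra0 d0 by (simp add: t3_def)
      have rra: "r t \<ge> ra" if t: "t \<ge> t3" for t
      proof -
        have "\<delta> * (t - t1) \<ge> \<delta> * (ra / \<delta>)" using t d0 by (intro mult_left_mono) (auto simp: t3_def)
        hence "\<delta> * (t - t1) \<ge> ra" using d0 by simp
        thus ?thesis using rgrow[of t] t t3 rpos[of t1] t1 by auto
      qed
      define T where "T = t3 + pi / (k * \<delta>)"
      have T3: "t3 \<le> T" using kp d0 by (simp add: T_def)
      have t30: "t3 \<ge> 0" using t3 t1 by auto
      have "ph T - ph t3 \<le> (- (k * \<delta>)) * (T - t3)"
      proof (rule ftc_le[OF T3 cph[OF t30] cS, where f'=th'])
        fix x assume x: "x \<in> {t3..T} - S"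
        show "(ph has_real_derivative th' x) (at x within {t3..T})" using dph[OF t30 x] .
        have x0: "x \<ge> 0" "x \<ge> t1" using x t3 t30 by auto
        have "w x \<le> k * V * cos (th x)" using wcos[OF x0(1) rra] x by auto
        also have "\<dots> \<le> k * V * cos p" using cle[OF x0(2)] kV by (simp add: mult_left_mono)
        finally have "w x \<le> - (k * \<delta>)" by (simp add: \<delta>_def)
        moreover have "V * sin (th x) / r x < 0" using sneg[OF x0(1)] trig V rpos[OF x0(1)]
          by (simp add: divide_neg_pos mult_pos_neg)
        ultimately show "th' x \<le> - (k * \<delta>)" by (simp add: th'_def)
      qed
      moreover have "(- (k * \<delta>)) * (T - t3) = - pi" using kp d0 by (simp add: T_def)
      moreover have "ph t3 < 0" "- pi < ph T" using phb t30 T3 by auto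
      ultimately show False by simp
    qed
  qed
  then obtain t0 m where t0: "t0 \<ge> 0" "th t0 \<in> {2*pi * of_int m .. 2*pi * of_int m + pi}" by blast
  show ?thesis
  proof (intro exI[of _ t0] conjI allI impI)
    show "t0 \<ge> 0" by fact
    fix t assume "t0 \<le> t"
    hence b: "th t \<in> {2*pi * of_int m .. 2*pi * of_int m + pi}" using inv t0 by blast
    have "of_int m \<le> th t / (2*pi)" "th t / (2*pi) < of_int m + 1"
      using b pi_gt_zero by (auto simp: field_simps, linarith)
    hence "\<lfloor>th t / (2*pi)\<rfloor> = m" by (simp add: floor_eq_iff)
    thus "bearing (th t) \<in> {0..pi}" using b by (simp add: bearing_def)
  qed
qed

end
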